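(* Let $\theta$ and $\rho$ be regular infinite cardinals with $\theta < \rho < \kappa$, and let $J$ be a $\kappa$-complete ideal on $\kappa$ with $NS_\kappa|E^\kappa_\theta \subseteq J$. Suppose that there is no descending $(J, I_\kappa)$-tower of length $\mathfrak{b}_\kappa$. Let $A \in J^+ \cap P(E^\kappa_\theta \cap acc(E^\kappa_{\geq\rho}))$, and let $c_\alpha \subseteq E^\kappa_{\geq\rho}\cap\alpha$ for $\alpha \in A$ be such that $\sup c_\alpha = \alpha$ and $\mathrm{o.t.}(c_\alpha) = \theta$ for every $\alpha \in A$, and $\{\alpha \in A : c_\alpha \subseteq C\} \in J^+$ for every closed unbounded $C \subseteq \kappa$. Then there is $B \in J^+ \cap P(A)$ such that $\{\alpha \in A : \exists\beta < \alpha\,(c_\alpha \setminus \beta \subseteq C)\} \in (J|B)^*$ for every closed unbounded $C \subseteq \kappa$.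
   Context: $\kappa$ is a regular uncountable cardinal. An ideal on $\kappa$ is a nonempty $J \subseteq P(\kappa)$ with $\kappa \notin J$, every bounded subset of $\kappa$ in $J$, $J$ closed under subsets and under unions of two members; $J^+ = P(\kappa)\setminus J$; for $B \in J^+$, $J|B = \{X \subseteq \kappa : X \cap B \in J\}$ and $(J|B)^* = \{X \subseteq\kappa : \kappa\setminus X \in J|B\}$; $\kappa$-complete means closed under unions of fewer than $\kappa$ members. $I_\kappa$ is the ideal of bounded subsets of $\kappa$. $acc(X) = \{\alpha \in \kappa\setminus\{0\} : \sup(X\cap\alpha)=\alpha\}$; $E^\kappa_\theta = \{\alpha \in acc(\kappa) : \mathrm{cf}(\alpha)=\theta\}$; $E^\kappa_{\geq\rho} = \{\alpha \in acc(\kappa) : \mathrm{cf}(\alpha)\geq\rho\}$; $NS_\kappa|E^\kappa_\theta = \{X : X\cap E^\kappa_\theta \text{ nonstationary}\}$. $\mathfrak{b}_\kappa$ is the least cardinality of an $F \subseteq {}^\kappa\kappa$ with no $g \in {}^\kappa\kappa$ such that $|\{\alpha : f(\alpha) \ge g(\alpha)\}| < \kappa$ for all $f \in F$. For $Y \subseteq P(\kappa)$, a descending $(J,Y)$-tower of length $\delta$ is $\langle A_\alpha : \alpha<\delta\rangle$ with each $A_\alpha \in J^+$ such that for $\alpha<\beta<\delta$: $A_\beta\setminus A_\alpha \in Y$ and $A_\alpha\setminus A_\beta \in J^+$. *)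

theory Defs
  imports Main "HOL-Library.Equipollence" "HOL-Library.Countable_Set"
begin

text \<open>Convention: the regular uncountable cardinal kappa is represented by a type 'a of
class wellorder whose universe has order type kappa; ordinals below kappa are the
elements of 'a, and subsets of kappa are values of type 'a set.\<close>

definition kappa_regular_uncountable :: "'a::wellorder itself \<Rightarrow> bool" where
  "kappa_regular_uncountable _ \<longleftrightarrow>
     \<not> countable (UNIV :: 'a set) \<and>
     (\<forall>\<gamma>::'a. \<not> ({..<\<gamma>} \<approx> (UNIV :: 'a set))) \<and>
     (\<forall>X :: 'a set. (\<forall>\<beta>. \<exists>x\<in>X. \<beta> \<le> x) \<longrightarrow>
        (\<exists>f :: 'a \<Rightarrow> 'a. bij_betw f UNIV X \<and> strict_mono f))"

definition otp :: "'a::wellorder set \<Rightarrow> 'a \<Rightarrow> bool" where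
  "otp X \<gamma> \<longleftrightarrow> (\<exists>f. bij_betw f {..<\<gamma>} X \<and> strict_mono_on {..<\<gamma>} f)"

definition cof :: "'a::wellorder \<Rightarrow> 'a" where
  "cof \<alpha> = (LEAST \<gamma>. \<exists>X. X \<subseteq> {..<\<alpha>} \<and> (\<forall>\<beta><\<alpha>. \<exists>x\<in>X. \<beta> \<le> x) \<and> otp X \<gamma>)"

definition is_cardinal :: "'a::wellorder \<Rightarrow> bool" where
  "is_cardinal \<gamma> \<longleftrightarrow> (\<forall>\<delta><\<gamma>. \<not> ({..<\<delta>} \<approx> {..<\<gamma>}))"

definition regular_infinite_cardinal :: "'a::wellorder \<Rightarrow> bool" where
  "regular_infinite_cardinal \<gamma> \<longleftrightarrow> is_cardinal \<gamma> \<and> infinite {..<\<gamma>} \<and> cof \<gamma> = \<gamma>"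

definition acc :: "'a::wellorder set \<Rightarrow> 'a set" where
  "acc X = {\<alpha>. (\<exists>\<beta>. \<beta> < \<alpha>) \<and> (\<forall>\<beta><\<alpha>. \<exists>x\<in>X. \<beta> < x \<and> x < \<alpha>)}"

definition E_cof :: "'a::wellorder \<Rightarrow> 'a set" where
  "E_cof \<theta> = {\<alpha> \<in> acc UNIV. cof \<alpha> = \<theta>}"

definition E_cof_ge :: "'a::wellorder \<Rightarrow> 'a set" where
  "E_cof_ge \<rho> = {\<alpha> \<in> acc UNIV. \<rho> \<le> cof \<alpha>}"

definition bounded_set :: "'a::wellorder set \<Rightarrow> bool" where
  "bounded_set X \<longleftrightarrow> (\<exists>\<beta>. X \<subseteq> {..<\<beta>})"

definition bounded_ideal :: "'a::wellorder set set" where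
  "bounded_ideal = {X. bounded_set X}"

definition club :: "'a::wellorder set \<Rightarrow> bool" where
  "club C \<longleftrightarrow> (\<forall>\<beta>. \<exists>x\<in>C. \<beta> \<le> x) \<and> acc C \<subseteq> C"

definition stationary :: "'a::wellorder set \<Rightarrow> bool" where
  "stationary S \<longleftrightarrow> (\<forall>C. club C \<longrightarrow> S \<inter> C \<noteq> {})"

definition is_ideal :: "'a::wellorder set set \<Rightarrow> bool" where
  "is_ideal J \<longleftrightarrow> J \<noteq> {} \<and> UNIV \<notin> J \<and> (\<forall>X. bounded_set X \<longrightarrow> X \<in> J) \<and>
     (\<forall>X\<in>J. \<forall>Y. Y \<subseteq> X \<longrightarrow> Y \<in> J) \<and> (\<forall>X\<in>J. \<forall>Y\<in>J. X \<union> Y \<in> J)"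

definition kappa_complete :: "'a::wellorder set set \<Rightarrow> bool" where
  "kappa_complete J \<longleftrightarrow> (\<forall>F. F \<subseteq> J \<and> F \<prec> (UNIV :: 'a set) \<longrightarrow> \<Union>F \<in> J)"

definition restr_ideal :: "'a set set \<Rightarrow> 'a set \<Rightarrow> 'a set set" where
  "restr_ideal J B = {X. X \<inter> B \<in> J}"

definition dual_filter :: "'a set set \<Rightarrow> 'a set set" where
  "dual_filter I = {X. UNIV - X \<in> I}"

definition unbounded_family :: "('a::wellorder \<Rightarrow> 'a) set \<Rightarrow> bool" where
  "unbounded_family F \<longleftrightarrow>
     \<not> (\<exists>g::'a \<Rightarrow> 'a. \<forall>f\<in>F. {\<alpha>. f \<alpha> \<ge> g \<alpha>} \<prec> (UNIV :: 'a set))"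

text \<open>A well-order w has order type b_kappa: it is an initial ordinal (cardinal well-order)
whose field has cardinality b_kappa, the least size of an unbounded family.\<close>
definition has_length_b_kappa :: "'i rel \<Rightarrow> 'a::wellorder itself \<Rightarrow> bool" where
  "has_length_b_kappa w _ \<longleftrightarrow> Card_order w \<and>
     (\<exists>F :: ('a \<Rightarrow> 'a) set. unbounded_family F \<and> Field w \<approx> F) \<and>
     (\<forall>F :: ('a \<Rightarrow> 'a) set. unbounded_family F \<longrightarrow> Field w \<lesssim> F)"

definition desc_tower :: "'a set set \<Rightarrow> 'a set set \<Rightarrow> 'i rel \<Rightarrow> ('i \<Rightarrow> 'a set) \<Rightarrow> bool" where
  "desc_tower J Y w A \<longleftrightarrow> Well_order w \<and> (\<forall>i\<in>Field w. A i \<notin> J) \<and>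
     (\<forall>i j. (i, j) \<in> w \<and> i \<noteq> j \<longrightarrow> A j - A i \<in> Y \<and> A i - A j \<notin> J)"

end

theory Submission
  imports Defs
begin

unbundle cardinal_syntax

lemma k_gt:
  assumes k: "kappa_regular_uncountable TYPE('a::wellorder)"
  shows "\<exists>y. (x::'a) < y"
proof (rule ccontr)
  assume "\<nexists>y. x < y"
  hence U: "UNIV = insert x {..<x}" by (auto simp: not_less_iff_gr_or_eq)
  have "infinite (UNIV::'a set)" using k unfolding kappa_regular_uncountable_def
    using countable_finite by blast
  hence "infinite {..<x}" using U by (metis finite_insert)
  hence "insert x {..<x} \<approx> {..<x}" by (rule infinite_insert_eqpoll)
  hence "{..<x} \<approx> (UNIV::'a set)" using U by (metis eqpoll_sym)
  thus False using k unfolding kappa_regular_uncountable_def by blast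
qed

lemma k_bdd:
  assumes k: "kappa_regular_uncountable TYPE('a::wellorder)"
    and X: "(X::'a set) \<prec> (UNIV::'a set)"
  shows "\<exists>\<beta>. X \<subseteq> {..<\<beta>}"
proof (rule ccontr)
  assume "\<nexists>\<beta>. X \<subseteq> {..<\<beta>}"
  hence "\<forall>\<beta>. \<exists>x\<in>X. \<beta> \<le> x" by (meson lessThan_iff not_le subsetI)
  then obtain f :: "'a \<Rightarrow> 'a" where "bij_betw f UNIV X"
    using k unfolding kappa_regular_uncountable_def by blast
  hence "(UNIV::'a set) \<approx> X" unfolding eqpoll_def by blast
  thus False using X unfolding lesspoll_def by (metis eqpoll_sym)
qed

lemma k_init:
  assumes k: "kappa_regular_uncountable TYPE('a::wellorder)"
  shows "{..<(x::'a)} \<prec> (UNIV::'a set)"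
  using k unfolding kappa_regular_uncountable_def lesspoll_def
  by (simp add: subset_imp_lepoll)

lemma k_img_bdd:
  assumes k: "kappa_regular_uncountable TYPE('a::wellorder)"
  shows "\<exists>\<beta>. (h::'a\<Rightarrow>'a) ` {..<x} \<subseteq> {..<\<beta>}"
proof -
  have "h ` {..<x} \<prec> (UNIV::'a set)"
    using lesspoll_trans1[OF image_lepoll k_init[OF k]] .
  thus ?thesis using k_bdd[OF k] by blast
qed

lemma countable_lesspoll:
  assumes k: "kappa_regular_uncountable TYPE('a::wellorder)" and c: "countable (X::'a set)"
  shows "X \<prec> (UNIV::'a set)"
proof -
  have "\<not> X \<approx> (UNIV::'a set)"
  proof
    assume "X \<approx> (UNIV::'a set)"
    hence "(UNIV::'a set) \<lesssim> X" by (metis eqpoll_sym eqpoll_imp_lepoll)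
    hence "countable (UNIV::'a set)" using countable_lepoll c by blast
    thus False using k unfolding kappa_regular_uncountable_def by blast
  qed
  thus ?thesis unfolding lesspoll_def by (simp add: subset_imp_lepoll)
qed

definition Cl :: "('a::wellorder \<Rightarrow> 'a) \<Rightarrow> 'a set" where
  "Cl h = {\<delta> \<in> acc UNIV. \<forall>\<gamma><\<delta>. h \<gamma> < \<delta>}"

definition nx :: "'a::wellorder set \<Rightarrow> 'a \<Rightarrow> 'a" where
  "nx D \<gamma> = (LEAST x. x \<in> D \<and> \<gamma> < x)"

lemma Cl_club:
  assumes k: "kappa_regular_uncountable TYPE('a::wellorder)"
  shows "club (Cl (h::'a\<Rightarrow>'a))"
proof -
  have "\<forall>x. \<exists>y. x < y \<and> h ` {..<x} \<subseteq> {..<y}"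
  proof
    fix x :: 'a
    obtain b1 where b1: "h ` {..<x} \<subseteq> {..<b1}" using k_img_bdd[OF k] by blast
    obtain s where s: "x < s" using k_gt[OF k] by blast
    show "\<exists>y. x < y \<and> h ` {..<x} \<subseteq> {..<y}"
      by (rule exI[of _ "max b1 s"]) (use b1 s in \<open>auto simp: less_max_iff_disj\<close>)
  qed
  then obtain nxt where nxt: "\<And>x. x < nxt x \<and> h ` {..<x} \<subseteq> {..<nxt x}" by metis
  have unb: "\<exists>x\<in>Cl h. \<beta> \<le> x" for \<beta>
  proof -
    define b where "b n = (nxt ^^ n) \<beta>" for n
    have bs: "b (Suc n) = nxt (b n)" for n unfolding b_def by simp
    have inc: "b n < b (Suc n)" for n using nxt bs by simp
    have "range b \<prec> (UNIV::'a set)" by (rule countable_lesspoll[OF k]) simp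
    then obtain \<mu> where "range b \<subseteq> {..<\<mu>}" using k_bdd[OF k] by blast
    hence ex: "\<forall>n. b n < \<mu>" by auto
    define \<delta> where "\<delta> = (LEAST \<delta>. \<forall>n. b n < \<delta>)"
    have d1: "\<forall>n. b n < \<delta>" unfolding \<delta>_def by (rule LeastI[of _ \<mu>]) (use ex in auto)
    have d2: "\<exists>n. \<gamma> < b n" if "\<gamma> < \<delta>" for \<gamma>
    proof (rule ccontr)
      assume "\<nexists>n. \<gamma> < b n"
      hence "\<forall>n. b n < \<gamma>" using inc by (meson not_less order_less_le_trans)
      hence "\<delta> \<le> \<gamma>" unfolding \<delta>_def by (rule Least_le)
      thus False using that by simp
    qed
    have "\<delta> \<in> Cl h"
      unfolding Cl_def acc_def
    proof (intro CollectI conjI allI impI)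
      show "\<exists>\<beta>. \<beta> < \<delta>" using d1 by blast
      fix \<gamma> assume g: "\<gamma> < \<delta>"
      then obtain n where n: "\<gamma> < b n" using d2 by blast
      show "\<exists>x\<in>UNIV. \<gamma> < x \<and> x < \<delta>" using n d1 by blast
      have "h \<gamma> < b (Suc n)" using nxt[of "b n"] n bs by auto
      thus "h \<gamma> < \<delta>" using d1 by (meson order_less_trans)
    qed
    moreover have "\<beta> \<le> \<delta>" using d1[rule_format, of 0] unfolding b_def by simp
    ultimately show ?thesis by blast
  qed
  have cl: "acc (Cl h) \<subseteq> Cl h"
  proof
    fix \<delta> assume d: "\<delta> \<in> acc (Cl h)"
    show "\<delta> \<in> Cl h" unfolding Cl_def acc_def
    proof (intro CollectI conjI allI impI)
      show "\<exists>\<beta>. \<beta> < \<delta>" using d unfolding acc_def by blast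
      fix \<gamma> assume g: "\<gamma> < \<delta>"
      then obtain x where x: "x \<in> Cl h" "\<gamma> < x" "x < \<delta>" using d unfolding acc_def by blast
      show "\<exists>x\<in>UNIV. \<gamma> < x \<and> x < \<delta>" using x by blast
      have "h \<gamma> < x" using x unfolding Cl_def by blast
      thus "h \<gamma> < \<delta>" using x by (meson order_less_trans)
    qed
  qed
  show ?thesis unfolding club_def using unb cl by blast
qed

lemma nx_prop:
  assumes k: "kappa_regular_uncountable TYPE('a::wellorder)" and D: "club (D::'a set)"
  shows "nx D \<gamma> \<in> D \<and> \<gamma> < nx D \<gamma>"
proof -
  obtain y where y: "\<gamma> < y" using k_gt[OF k] by blast
  obtain x where x: "x \<in> D" "y \<le> x" using D unfolding club_def by blast
  show ?thesis unfolding nx_def by (rule LeastI[of _ x]) (use x y in auto)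
qed

lemma Cl_sub:
  assumes k: "kappa_regular_uncountable TYPE('a::wellorder)" and D: "club (D::'a set)"
    and H: "\<forall>\<gamma>. \<beta>0 \<le> \<gamma> \<longrightarrow> nx D \<gamma> \<le> h \<gamma>"
    and d: "\<delta> \<in> Cl h" and b: "\<beta>0 < \<delta>"
  shows "\<delta> \<in> D"
proof -
  have "\<delta> \<in> acc D" unfolding acc_def
  proof (intro CollectI conjI allI impI)
    show "\<exists>\<beta>. \<beta> < \<delta>" using b by blast
    fix \<beta> assume "\<beta> < \<delta>"
    hence m: "max \<beta> \<beta>0 < \<delta>" using b by simp
    have "nx D (max \<beta> \<beta>0) \<le> h (max \<beta> \<beta>0)" using H by simp
    also have "\<dots> < \<delta>" using d m unfolding Cl_def by blast
    finally show "\<exists>x\<in>D. \<beta> < x \<and> x < \<delta>"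
      using nx_prop[OF k D, of "max \<beta> \<beta>0"] by (metis max.strict_boundedE)
  qed
  thus ?thesis using D unfolding club_def by blast
qed

lemma Cl_sub_all:
  assumes k: "kappa_regular_uncountable TYPE('a::wellorder)" and D: "club (D::'a set)"
    and H: "\<forall>\<gamma>. nx D \<gamma> \<le> h \<gamma>"
  shows "Cl h \<subseteq> D"
proof
  fix \<delta> assume d: "\<delta> \<in> Cl h"
  have "\<delta> \<in> acc D" unfolding acc_def
  proof (intro CollectI conjI allI impI)
    show "\<exists>\<beta>. \<beta> < \<delta>" using d unfolding Cl_def acc_def by blast
    fix \<beta> assume b: "\<beta> < \<delta>"
    have "nx D \<beta> \<le> h \<beta>" using H by simp
    also have "\<dots> < \<delta>" using d b unfolding Cl_def by blast
    finally show "\<exists>x\<in>D. \<beta> < x \<and> x < \<delta>"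
      using nx_prop[OF k D, of \<beta>] by blast
  qed
  thus "\<delta> \<in> D" using D unfolding club_def by blast
qed

lemma Cl_mono:
  assumes "\<forall>\<gamma>. h \<gamma> \<le> g \<gamma>"
  shows "Cl g \<subseteq> Cl h"
  using assms unfolding Cl_def by (auto intro: le_less_trans)

definition SS :: "'a::wellorder set \<Rightarrow> ('a \<Rightarrow> 'a set) \<Rightarrow> 'a set \<Rightarrow> 'a set" where
  "SS A c D = {\<alpha>\<in>A. \<exists>\<beta><\<alpha>. c \<alpha> - {..<\<beta>} \<subseteq> D}"

lemma SS_mono: "D \<subseteq> D' \<Longrightarrow> SS A c D \<subseteq> SS A c D'"
  unfolding SS_def by blast

lemma SS_bdd:
  assumes H: "\<forall>x\<in>D'. \<beta>0 < x \<longrightarrow> x \<in> D" and b: "\<beta>0 < \<beta>1"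
  shows "SS A c D' - SS A c D \<subseteq> {..\<beta>1}"
proof
  fix \<alpha> assume a: "\<alpha> \<in> SS A c D' - SS A c D"
  show "\<alpha> \<in> {..\<beta>1}"
  proof (rule ccontr)
    assume "\<alpha> \<notin> {..\<beta>1}"
    hence a1: "\<beta>1 < \<alpha>" by simp
    obtain \<beta> where be: "\<beta> < \<alpha>" "c \<alpha> - {..<\<beta>} \<subseteq> D'" "\<alpha> \<in> A" using a unfolding SS_def by blast
    have "max \<beta> \<beta>1 < \<alpha>" using be a1 by simp
    moreover have "c \<alpha> - {..<max \<beta> \<beta>1} \<subseteq> D"
    proof
      fix x assume "x \<in> c \<alpha> - {..<max \<beta> \<beta>1}"
      hence "x \<in> D'" "\<beta>0 < x" using be b by (auto simp: not_less max.bounded_iff)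
      thus "x \<in> D" using H by blast
    qed
    ultimately have "\<alpha> \<in> SS A c D" using be unfolding SS_def by blast
    thus False using a by blast
  qed
qed

lemma bdd_atMost:
  assumes k: "kappa_regular_uncountable TYPE('a::wellorder)"
  shows "bounded_set {..(x::'a)}"
proof -
  obtain y where "x < y" using k_gt[OF k] by blast
  thus ?thesis unfolding bounded_set_def by (intro exI[of _ y]) auto
qed

theorem proposition5p4:
  fixes J :: "'a::wellorder set set"
    and \<theta> \<rho> :: 'a
    and A :: "'a set"
    and c :: "'a \<Rightarrow> 'a set"
  assumes kappa: "kappa_regular_uncountable TYPE('a)"
    and theta: "regular_infinite_cardinal \<theta>"
    and rho: "regular_infinite_cardinal \<rho>"
    and theta_rho: "\<theta> < \<rho>"
    and J_ideal: "is_ideal J"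
    and J_complete: "kappa_complete J"
    and NS: "\<forall>X. \<not> stationary (X \<inter> E_cof \<theta>) \<longrightarrow> X \<in> J"
    and no_tower: "\<not> (\<exists>(w :: ('a \<Rightarrow> 'a) rel) (T :: ('a \<Rightarrow> 'a) \<Rightarrow> 'a set).
                       has_length_b_kappa w TYPE('a) \<and> desc_tower J bounded_ideal w T)"
    and A_pos: "A \<notin> J"
    and A_sub: "A \<subseteq> E_cof \<theta> \<inter> acc (E_cof_ge \<rho>)"
    and c_sub: "\<forall>\<alpha>\<in>A. c \<alpha> \<subseteq> E_cof_ge \<rho> \<inter> {..<\<alpha>}"
    and c_sup: "\<forall>\<alpha>\<in>A. \<forall>\<beta><\<alpha>. \<exists>x\<in>c \<alpha>. \<beta> < x"
    and c_otp: "\<forall>\<alpha>\<in>A. otp (c \<alpha>) \<theta>"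
    and c_club: "\<forall>C. club C \<longrightarrow> {\<alpha>\<in>A. c \<alpha> \<subseteq> C} \<notin> J"
  shows "\<exists>B. B \<notin> J \<and> B \<subseteq> A \<and>
           (\<forall>C. club C \<longrightarrow>
              {\<alpha>\<in>A. \<exists>\<beta><\<alpha>. c \<alpha> - {..<\<beta>} \<subseteq> C} \<in> dual_filter (restr_ideal J B))"
proof (rule ccontr)
  assume neg: "\<not> ?thesis"
  define S where "S = SS A c"
  have setS: "{\<alpha>\<in>A. \<exists>\<beta><\<alpha>. c \<alpha> - {..<\<beta>} \<subseteq> C} = S C" for C
    by (simp add: S_def SS_def)
  have J_sub: "Y \<in> J" if "X \<in> J" "Y \<subseteq> X" for X Y
    using J_ideal that unfolding is_ideal_def by blast
  have J_un: "X \<union> Y \<in> J" if "X \<in> J" "Y \<in> J" for X Y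
    using J_ideal that unfolding is_ideal_def by blast
  have J_bdd: "X \<in> J" if "bounded_set X" for X
    using J_ideal that unfolding is_ideal_def by blast
  have S_subA: "S D \<subseteq> A" for D unfolding S_def SS_def by blast
  have S_pos: "S D \<notin> J" if "club D" for D
  proof
    assume "S D \<in> J"
    moreover have "{\<alpha>\<in>A. c \<alpha> \<subseteq> D} \<subseteq> S D"
    proof
      fix \<alpha> assume a: "\<alpha> \<in> {\<alpha>\<in>A. c \<alpha> \<subseteq> D}"
      hence "\<alpha> \<in> acc UNIV" using A_sub unfolding E_cof_def by blast
      then obtain \<beta> where "\<beta> < \<alpha>" unfolding acc_def by blast
      thus "\<alpha> \<in> S D" using a unfolding S_def SS_def by blast
    qed
    ultimately show False using c_club that J_sub by blast
  qed
  have "\<forall>B. \<exists>C. B \<notin> J \<and> B \<subseteq> A \<longrightarrow> club C \<and> B - S C \<notin> J"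
  proof (intro allI)
    fix B
    show "\<exists>C. B \<notin> J \<and> B \<subseteq> A \<longrightarrow> club C \<and> B - S C \<notin> J"
    proof (cases "B \<notin> J \<and> B \<subseteq> A")
      case True
      then obtain C where C: "club C" "S C \<notin> dual_filter (restr_ideal J B)"
        using neg setS by auto
      have "(UNIV - S C) \<inter> B = B - S C" by blast
      hence "B - S C \<notin> J" using C(2) unfolding dual_filter_def restr_ideal_def by auto
      thus ?thesis using C(1) by blast
    qed blast
  qed
  then obtain Ch where Ch: "\<And>B. B \<notin> J \<Longrightarrow> B \<subseteq> A \<Longrightarrow> club (Ch B) \<and> B - S (Ch B) \<notin> J"
    by metis
  define R where "R = {|F| | F :: ('a \<Rightarrow> 'a) set. unbounded_family F}"
  have unbU: "unbounded_family (UNIV :: ('a \<Rightarrow> 'a) set)"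
    unfolding unbounded_family_def
  proof
    assume "\<exists>g::'a\<Rightarrow>'a. \<forall>f\<in>UNIV. {\<alpha>. f \<alpha> \<ge> g \<alpha>} \<prec> (UNIV :: 'a set)"
    then obtain g :: "'a\<Rightarrow>'a" where "{\<alpha>. g \<alpha> \<ge> g \<alpha>} \<prec> (UNIV :: 'a set)" by blast
    thus False unfolding lesspoll_def by (simp add: eqpoll_refl)
  qed
  have "R \<noteq> {}" unfolding R_def using unbU by blast
  moreover have "\<forall>r\<in>R. Card_order r" unfolding R_def using card_of_Card_order by blast
  ultimately obtain r where r: "r \<in> R" "\<forall>r'\<in>R. r \<le>o r'"
    using exists_minim_Card_order by blast
  then obtain F0 :: "('a \<Rightarrow> 'a) set" where F0: "r = |F0|" "unbounded_family F0"
    unfolding R_def by blast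
  have F0min: "F0 \<lesssim> F" if "unbounded_family F" for F :: "('a \<Rightarrow> 'a) set"
  proof -
    have "|F| \<in> R" unfolding R_def using that by blast
    hence "|F0| \<le>o |F|" using r(2) F0(1) by blast
    thus ?thesis unfolding lepoll_def using card_of_ordLeq by blast
  qed
  define w where "w = |F0|"
  have wC: "Card_order w" unfolding w_def by (rule card_of_Card_order)
  have wF: "Field w = F0" unfolding w_def by (rule Field_card_of)
  have hw: "has_length_b_kappa w TYPE('a)"
    unfolding has_length_b_kappa_def
  proof (intro conjI allI impI)
    show "Card_order w" by (rule wC)
    show "\<exists>F :: ('a \<Rightarrow> 'a) set. unbounded_family F \<and> Field w \<approx> F"
      by (rule exI[of _ F0]) (simp add: wF F0(2) eqpoll_refl)
    fix F :: "('a \<Rightarrow> 'a) set" assume "unbounded_family F"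
    thus "Field w \<lesssim> F" unfolding wF by (rule F0min)
  qed
  have wW: "Well_order w" using wC by (simp add: card_order_on_well_order_on)
  have wf: "wf (w - Id)" using wW wo_rel.WF unfolding wo_rel_def by blast
  have small: "\<not> unbounded_family G" if "\<xi> \<in> Field w" "G \<lesssim> underS w \<xi>" for G :: "('a \<Rightarrow> 'a) set" and \<xi>
  proof
    assume "unbounded_family G"
    hence "F0 \<lesssim> G" by (rule F0min)
    hence "F0 \<lesssim> underS w \<xi>" using that(2) by (rule lepoll_trans)
    hence "|F0| \<le>o |underS w \<xi>|" unfolding lepoll_def using card_of_ordLeq by blast
    moreover have "|underS w \<xi>| <o w" using card_of_underS[OF wC that(1)] .
    ultimately show False unfolding w_def using not_ordLess_ordLeq by blast
  qed
  define bnd where "bnd G = (SOME h::'a\<Rightarrow>'a. \<forall>f\<in>G. {\<alpha>. f \<alpha> \<ge> h \<alpha>} \<prec> (UNIV :: 'a set))"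
    for G :: "('a\<Rightarrow>'a) set"
  have bnd: "\<forall>f\<in>G. {\<alpha>. f \<alpha> \<ge> bnd G \<alpha>} \<prec> (UNIV :: 'a set)" if "\<not> unbounded_family G" for G :: "('a\<Rightarrow>'a) set"
  proof -
    have "\<exists>h::'a\<Rightarrow>'a. \<forall>f\<in>G. {\<alpha>. f \<alpha> \<ge> h \<alpha>} \<prec> (UNIV :: 'a set)"
      using that unfolding unbounded_family_def by blast
    thus ?thesis unfolding bnd_def by (rule someI_ex)
  qed
  define step where "step h = (\<lambda>\<gamma>. max (h \<gamma>) (nx (Ch (S (Cl h))) \<gamma>))" for h :: "'a\<Rightarrow>'a"
  define \<Phi> where "\<Phi> rr \<xi> = step (bnd ((\<lambda>\<eta>. nx (Cl (rr \<eta>))) ` {\<eta>. (\<eta>, \<xi>) \<in> w - Id}))"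
    for rr :: "('a\<Rightarrow>'a) \<Rightarrow> ('a\<Rightarrow>'a)" and \<xi>
  define g where "g = wfrec (w - Id) \<Phi>"
  define G where "G \<xi> = (\<lambda>\<eta>. nx (Cl (g \<eta>))) ` {\<eta>. (\<eta>, \<xi>) \<in> w - Id}" for \<xi>
  define H where "H \<xi> = bnd (G \<xi>)" for \<xi>
  have geq: "g \<xi> = step (H \<xi>)" for \<xi>
  proof -
    have "g \<xi> = \<Phi> (cut g (w - Id) \<xi>) \<xi>" unfolding g_def by (rule wfrec[OF wf])
    moreover have "(\<lambda>\<eta>. nx (Cl (cut g (w - Id) \<xi> \<eta>))) ` {\<eta>. (\<eta>, \<xi>) \<in> w - Id} = G \<xi>"
      unfolding G_def by (rule image_cong) (auto simp: cut_apply)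
    ultimately show ?thesis unfolding \<Phi>_def H_def by simp
  qed
  have Hb: "{\<alpha>. f \<alpha> \<ge> H \<xi> \<alpha>} \<prec> (UNIV :: 'a set)" if "\<xi> \<in> Field w" "f \<in> G \<xi>" for \<xi> f
  proof -
    have "{\<eta>. (\<eta>, \<xi>) \<in> w - Id} = underS w \<xi>" unfolding underS_def by auto
    hence "G \<xi> \<lesssim> underS w \<xi>" unfolding G_def by (metis image_lepoll)
    hence "\<not> unbounded_family (G \<xi>)" by (rule small[OF that(1)])
    from bnd[OF this] that(2) show ?thesis unfolding H_def by blast
  qed
  define T where "T \<xi> = S (Cl (g \<xi>))" for \<xi>
  have "desc_tower J bounded_ideal w T"
    unfolding desc_tower_def
  proof (intro conjI allI impI ballI)
    show "Well_order w" by (rule wW)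
    fix i assume "i \<in> Field w"
    show "T i \<notin> J" unfolding T_def by (rule S_pos[OF Cl_club[OF kappa]])
  next
    fix i j assume ij: "(i, j) \<in> w \<and> i \<noteq> j"
    hence jF: "j \<in> Field w" unfolding Field_def by blast
    define h where "h = H j"
    have "nx (Cl (g i)) \<in> G j" unfolding G_def using ij by blast
    hence "{\<alpha>. nx (Cl (g i)) \<alpha> \<ge> h \<alpha>} \<prec> (UNIV :: 'a set)" using Hb jF unfolding h_def by blast
    then obtain \<beta>0 where b0: "{\<alpha>. nx (Cl (g i)) \<alpha> \<ge> h \<alpha>} \<subseteq> {..<\<beta>0}" using k_bdd[OF kappa] by blast
    have H1: "\<forall>\<gamma>. \<beta>0 \<le> \<gamma> \<longrightarrow> nx (Cl (g i)) \<gamma> \<le> h \<gamma>"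
      using b0 by (metis (no_types, lifting) lessThan_iff mem_Collect_eq not_le less_imp_le subsetD)
    have sub1: "\<forall>x\<in>Cl h. \<beta>0 < x \<longrightarrow> x \<in> Cl (g i)"
      using Cl_sub[OF kappa Cl_club[OF kappa] H1] by blast
    define C where "C = Ch (S (Cl h))"
    have gj: "g j = (\<lambda>\<gamma>. max (h \<gamma>) (nx C \<gamma>))" unfolding geq step_def h_def C_def ..
    have sub2: "Cl (g j) \<subseteq> Cl h" by (rule Cl_mono) (simp add: gj)
    have BJ: "S (Cl h) \<notin> J" by (rule S_pos[OF Cl_club[OF kappa]])
    have Cp: "club C \<and> S (Cl h) - S C \<notin> J" unfolding C_def by (rule Ch[OF BJ S_subA])
    have sub3: "Cl (g j) \<subseteq> C" by (rule Cl_sub_all[OF kappa]) (use Cp gj in auto)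
    obtain \<beta>1 where b1: "\<beta>0 < \<beta>1" using k_gt[OF kappa] by blast
    have "T j - T i \<subseteq> {..\<beta>1}" unfolding T_def S_def
      by (rule SS_bdd[OF _ b1]) (use sub1 sub2 in blast)
    hence "bounded_set (T j - T i)" using bdd_atMost[OF kappa] unfolding bounded_set_def by blast
    thus "T j - T i \<in> bounded_ideal" unfolding bounded_ideal_def by blast
    have e2: "S (Cl h) - T i \<subseteq> {..\<beta>1}" unfolding T_def S_def
      by (rule SS_bdd[OF _ b1]) (use sub1 in blast)
    have e3: "T j \<subseteq> S C" unfolding T_def by (rule SS_mono[of _ _ A c, folded S_def]) (rule sub3)
    have e4: "S (Cl h) - S C \<subseteq> (T i - T j) \<union> {..\<beta>1}" using e2 e3 by blast
    show "T i - T j \<notin> J"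
    proof
      assume "T i - T j \<in> J"
      moreover have "{..\<beta>1} \<in> J" by (rule J_bdd[OF bdd_atMost[OF kappa]])
      ultimately have "(T i - T j) \<union> {..\<beta>1} \<in> J" by (rule J_un)
      hence "S (Cl h) - S C \<in> J" using e4 J_sub by blast
      thus False using Cp by blast
    qed
  qed
  thus False using no_tower hw by blast
qed

end
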